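(* Let $\mathbb X,\mathbb H,\mathbb Y$ be separable real Hilbert spaces, $\mathbf W\colon\mathbb X\to\mathbb H$ and $\mathbf A\colon\mathbb H\to\mathbb Y$ bounded linear operators, $\mathcal R\colon\mathbb X\to[0,\infty]$ proper, convex and weakly lower semicontinuous, $(\phi_\lambda)_{\lambda\in\Lambda}$ an orthonormal basis of $\mathbb H$ indexed by a countable set $\Lambda$, and $(\kappa_\lambda)_{\lambda\in\Lambda}$ weights with $\kappa_\lambda\ge a>0$. Assume there is $x\in\mathbb X$ with $\mathcal R(x)+\|\mathbf W x\|_{1,\kappa}<\infty$. Suppose $(x_\star,y_\star)\in\mathbb X\times\mathbb Y$ satisfies: (2.1) $\mathbf A\mathbf W x_\star=y_\star$; (2.2) there is $\nu\in\mathbb Y$ with $\mathbf W^*\mathbf A^*\nu\in\partial\big(\mathcal R+\|\mathbf W(\cdot)\|_{1,\kappa}\big)(x_\star)$; (2.3) there exist $\xi\in\partial\mathcal R(x_\star)$ and $\eta\in\partial\|\cdot\|_{1,\kappa}(\mathbf W x_\star)$ with $\mathbf W^*\mathbf A^*\nu=\xi+\mathbf W^*\eta$; (2.4) $\mathbf A_{\Omega[\eta]}\colon\mathbb H_{\Omega[\eta]}\to\mathbb Y$ is injective. Let $C>0$. Then for every $\delta>0$, every $y^\delta\in\mathbb Y$ with $\|y^\delta-y_\star\|\le\delta$, $\alpha=C\delta$, and every minimizer $x_\alpha^\delta$ over $\mathbb X$ of $$\mathcal A_{\alpha,y^\delta}(x)=\tfrac12\|\mathbf A\mathbf W x-y^\delta\|^2+\alpha\big(\mathcal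 R(x)+\|\mathbf W x\|_{1,\kappa}\big),$$ we have $$\mathcal D^{\mathcal R}_\xi(x_\alpha^\delta,x_\star)\le c_{(\nu,\eta)}\,\delta,\qquad \|\mathbf W x_\alpha^\delta-\mathbf W x_\star\|\le d_{(\nu,\eta)}\,\delta,$$ where $$c_{(\nu,\eta)}=\frac{(1+C\|\nu\|)^2}{2C},\qquad d_{(\nu,\eta)}=2\|\mathbf A_{\Omega[\eta]}^{-1}\|\,(1+C\|\nu\|)+\frac{1+\|\mathbf A_{\Omega[\eta]}^{-1}\|\,\|\mathbf A\|}{m[\eta]}\,c_{(\nu,\eta)}.$$
   Context: Weighted $\ell^1$ norm: $\|h\|_{1,\kappa}=\sum_{\lambda\in\Lambda}\kappa_\lambda|\langle\phi_\lambda,h\rangle|\in[0,\infty]$ for $h\in\mathbb H$. Subdifferential: $\xi\in\partial\mathcal F(z_\star)$ iff $\mathcal F(z)\ge\mathcal F(z_\star)+\langle\xi,z-z_\star\rangle$ for all $z$. Bregman distance: for $\xi\in\partial\mathcal F(z_\star)$, $\mathcal D^{\mathcal F}_\xi(z,z_\star)=\mathcal F(z)-\mathcal F(z_\star)-\langle\xi,z-z_\star\rangle$. For $\eta=\sum_\lambda\eta_\lambda\phi_\lambda\in\partial\|\cdot\|_{1,\kappa}(h_\star)$ (which forces $|\eta_\lambda|\le\kappa_\lambda$ for all $\lambda$), set $\Omega[\eta]=\{\lambda\in\Lambda: |\eta_\lambda|=\kappa_\lambda\}$ (a finite set) and $m[\eta]=\min\{\kappa_\lambda-|\eta_\lambda|:\lambda\notin\Omega[\eta]\}>0$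 (with the term involving $1/m[\eta]$ read as $0$ if $\Lambda=\Omega[\eta]$). For finite $\Omega\subseteq\Lambda$: $\mathbb H_\Omega=\operatorname{span}\{\phi_\lambda:\lambda\in\Omega\}$, $\mathbf A_\Omega=\mathbf A|_{\mathbb H_\Omega}\colon\mathbb H_\Omega\to\mathbb Y$, and when $\mathbf A_\Omega$ is injective, $\|\mathbf A_\Omega^{-1}\|$ is the operator norm of its inverse $\operatorname{ran}(\mathbf A_\Omega)\to\mathbb H_\Omega$. *)

theory Defs
  imports "HOL-Analysis.Analysis"
begin

text \<open>Separable real Hilbert spaces are types of class real_inner + complete_space
  whose norm topology is separable.\<close>

definition weakly_closed :: "'a::real_inner set \<Rightarrow> bool" where
  "weakly_closed S \<longleftrightarrow>
     (\<forall>x. x \<notin> S \<longrightarrow> (\<exists>Z e. finite Z \<and> e > 0 \<and>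
         (\<forall>y\<in>S. \<exists>z\<in>Z. \<bar>(y - x) \<bullet> z\<bar> \<ge> e)))"

definition weakly_lsc :: "('a::real_inner \<Rightarrow> ereal) \<Rightarrow> bool" where
  "weakly_lsc F \<longleftrightarrow> (\<forall>t. weakly_closed {x. F x \<le> t})"

definition proper_fun :: "('a \<Rightarrow> ereal) \<Rightarrow> bool" where
  "proper_fun F \<longleftrightarrow> (\<exists>x. F x < \<infinity>) \<and> (\<forall>x. F x > -\<infinity>)"

definition convex_ereal :: "('a::real_vector \<Rightarrow> ereal) \<Rightarrow> bool" where
  "convex_ereal F \<longleftrightarrow> (\<forall>x y t. 0 < t \<and> t < 1 \<longrightarrow>
      F (t *\<^sub>R x + (1 - t) *\<^sub>R y) \<le> ereal t * F x + ereal (1 - t) * F y)"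

definition orthonormal_basis :: "'l set \<Rightarrow> ('l \<Rightarrow> 'h::real_inner) \<Rightarrow> bool" where
  "orthonormal_basis \<Lambda> \<phi> \<longleftrightarrow>
     (\<forall>i\<in>\<Lambda>. \<forall>j\<in>\<Lambda>. \<phi> i \<bullet> \<phi> j = (if i = j then 1 else 0)) \<and>
     closure (span (\<phi> ` \<Lambda>)) = UNIV"

definition wl1 :: "'l set \<Rightarrow> ('l \<Rightarrow> 'h::real_inner) \<Rightarrow> ('l \<Rightarrow> real) \<Rightarrow> 'h \<Rightarrow> ereal" where
  "wl1 \<Lambda> \<phi> \<kappa> h = enn2ereal (\<Sum>\<^sub>\<infinity>l\<in>\<Lambda>. ennreal (\<kappa> l * \<bar>\<phi> l \<bullet> h\<bar>))"

definition subdiff :: "('a::real_inner \<Rightarrow> ereal) \<Rightarrow> 'a \<Rightarrow> 'a set" where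
  "subdiff F z0 = {\<xi>. \<forall>z. F z \<ge> F z0 + ereal (\<xi> \<bullet> (z - z0))}"

definition bregman :: "('a::real_inner \<Rightarrow> ereal) \<Rightarrow> 'a \<Rightarrow> 'a \<Rightarrow> 'a \<Rightarrow> ereal" where
  "bregman F \<xi> z z0 = F z - F z0 - ereal (\<xi> \<bullet> (z - z0))"

definition Omega :: "'l set \<Rightarrow> ('l \<Rightarrow> 'h::real_inner) \<Rightarrow> ('l \<Rightarrow> real) \<Rightarrow> 'h \<Rightarrow> 'l set" where
  "Omega \<Lambda> \<phi> \<kappa> \<eta> = {l\<in>\<Lambda>. \<bar>\<phi> l \<bullet> \<eta>\<bar> = \<kappa> l}"

definition m_eta :: "'l set \<Rightarrow> ('l \<Rightarrow> 'h::real_inner) \<Rightarrow> ('l \<Rightarrow> real) \<Rightarrow> 'h \<Rightarrow> real" where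
  "m_eta \<Lambda> \<phi> \<kappa> \<eta> = (INF l\<in>\<Lambda> - Omega \<Lambda> \<phi> \<kappa> \<eta>. \<kappa> l - \<bar>\<phi> l \<bullet> \<eta>\<bar>)"

text \<open>Operator norm of the inverse of A restricted to the subspace H (A injective on H),
  as a map from ran(A|H) to H.\<close>
definition inv_opnorm :: "('h::real_normed_vector \<Rightarrow> 'y::real_normed_vector) \<Rightarrow> 'h set \<Rightarrow> real" where
  "inv_opnorm A H = Sup ((\<lambda>y. norm (the_inv_into H A y)) ` {y \<in> A ` H. norm y \<le> 1})"

text \<open>The constants c and d; the 1/m term is read as 0 if \<Lambda> = \<Omega>.\<close>
definition c_const :: "real \<Rightarrow> real \<Rightarrow> real" where
  "c_const C nn = (1 + C * nn)\<^sup>2 / (2 * C)"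

definition d_const :: "real \<Rightarrow> real \<Rightarrow> real \<Rightarrow> real \<Rightarrow> bool \<Rightarrow> real \<Rightarrow> real" where
  "d_const C nn ai an full m =
     2 * ai * (1 + C * nn) + (if full then 0 else (1 + ai * an) / m * c_const C nn)"

end

theory Submission
  imports Defs
begin


lemma riesz:
  fixes f :: "'a::{real_inner,complete_space} \<Rightarrow> real"
  assumes bl: "bounded_linear f"
  shows "\<exists>z. \<forall>x. f x = x \<bullet> z"
proof (cases "\<forall>x. f x = 0")
  case True then show ?thesis by (intro exI[of _ 0]) simp
next
  case False
  interpret f: bounded_linear f by fact
  obtain u0 where u0: "f u0 \<noteq> 0" using False by blast
  define u where "u = u0 /\<^sub>R f u0"
  have fu: "f u = 1" using u0 by (simp add: u_def f.scale)
  define K where "K = {x. f x = 0}"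
  have K0: "0 \<in> K" by (simp add: K_def)
  have Kadd: "a + b \<in> K" if "a \<in> K" "b \<in> K" for a b using that by (simp add: K_def f.add)
  have Ksc: "c *\<^sub>R a \<in> K" if "a \<in> K" for a c using that by (simp add: K_def f.scale)
  have closedK: "closed K" unfolding K_def
    by (intro closed_Collect_eq continuous_intros f.continuous_on)
  define S where "S = (\<lambda>k. norm (u - k)) ` K"
  define d where "d = Inf S"
  have Sne: "S \<noteq> {}" using K0 by (auto simp: S_def)
  have Sbdd: "bdd_below S" unfolding S_def by (rule bdd_belowI[of _ 0]) auto
  have d_le: "d \<le> norm (u - k)" if "k \<in> K" for k
    unfolding d_def S_def using Sbdd that by (auto intro!: cInf_lower simp: S_def)
  have d_nonneg: "0 \<le> d" using d_le[OF K0] 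
    unfolding d_def using Sne by (auto intro!: cInf_greatest simp: S_def)
  have "\<forall>n. \<exists>k\<in>K. norm (u - k) < d + 1 / (real n + 1)"
  proof
    fix n :: nat
    have "Inf S < d + 1 / (real n + 1)" unfolding d_def by (simp add: add_pos_pos)
    from cInf_lessD[OF Sne this] show "\<exists>k\<in>K. norm (u - k) < d + 1 / (real n + 1)"
      by (auto simp: S_def)
  qed
  then obtain k where kK: "\<And>n. k n \<in> K" and kd: "\<And>n. norm (u - k n) < d + 1 / (real n + 1)"
    by metis
  define e where "e = (\<lambda>n::nat. 1 / (real n + 1))"
  have e_pos: "e n > 0" for n by (simp add: e_def)
  have e_le1: "e n \<le> 1" for n by (simp add: e_def)
  have e_mono: "e n \<le> e m" if "m \<le> n" for m n using that by (simp add: e_def frac_le)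
  have sq: "(norm (u - k n))\<^sup>2 \<le> d\<^sup>2 + (2*d+1) * e n" for n
  proof -
    have "norm (u - k n) \<le> d + e n" using kd[of n] by (simp add: e_def)
    hence "(norm (u - k n))\<^sup>2 \<le> (d + e n)\<^sup>2" by (simp add: power_mono)
    also have "\<dots> = d\<^sup>2 + 2*d*e n + e n * e n" by (simp add: power2_eq_square algebra_simps)
    also have "\<dots> \<le> d\<^sup>2 + 2*d*e n + e n" using e_le1[of n] e_pos[of n]
      by (simp add: mult_le_cancel_left1)
    finally show ?thesis by (simp add: algebra_simps)
  qed
  have para: "(norm (a - b))\<^sup>2 = 2 * (norm (u - a))\<^sup>2 + 2 * (norm (u - b))\<^sup>2 - 4 * (norm (u - (1/2) *\<^sub>R (a + b)))\<^sup>2"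
    for a b :: 'a
    by (simp add: power2_norm_eq_inner inner_diff_left inner_diff_right inner_add_left inner_add_right
        inner_commute algebra_simps)
  have dist_kk: "(norm (k m - k n))\<^sup>2 \<le> 2*(2*d+1)*e m + 2*(2*d+1)*e n" for m n
  proof -
    have "(1/2) *\<^sub>R (k m + k n) \<in> K" using kK by (intro Ksc Kadd)
    hence "d \<le> norm (u - (1/2) *\<^sub>R (k m + k n))" by (rule d_le)
    hence "d\<^sup>2 \<le> (norm (u - (1/2) *\<^sub>R (k m + k n)))\<^sup>2" using d_nonneg by (simp add: power_mono)
    thus ?thesis using para[of "k m" "k n"] sq[of m] sq[of n] by linarith
  qed
  have cauchy: "Cauchy k"
  proof (rule metric_CauchyI)
    fix eps :: real assume eps: "eps > 0"
    define t where "t = eps\<^sup>2 / (4*(2*d+1))"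
    have t_pos: "t > 0" using eps d_nonneg by (simp add: t_def)
    obtain M :: nat where M: "inverse (real (Suc M)) < t"
      using reals_Archimedean[OF t_pos] by blast
    have eM: "e M < t" using M by (simp add: e_def field_simps)
    show "\<exists>M. \<forall>m\<ge>M. \<forall>n\<ge>M. dist (k m) (k n) < eps"
    proof (intro exI allI impI)
      fix m n assume mn: "m \<ge> M" "n \<ge> M"
      have "(dist (k m) (k n))\<^sup>2 \<le> 2*(2*d+1)*e m + 2*(2*d+1)*e n"
        using dist_kk by (simp add: dist_norm)
      also have "\<dots> \<le> 2*(2*d+1)*e M + 2*(2*d+1)*e M"
        using e_mono[OF mn(1)] e_mono[OF mn(2)] d_nonneg
        by (intro add_mono mult_left_mono) auto
      also have "\<dots> = 4*(2*d+1)*e M" by simp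
      also have "\<dots> < 4*(2*d+1)*t" using eM d_nonneg by (intro mult_strict_left_mono) auto
      also have "\<dots> = eps\<^sup>2" using d_nonneg by (simp add: t_def)
      finally have "(dist (k m) (k n))\<^sup>2 < eps\<^sup>2" .
      thus "dist (k m) (k n) < eps" using eps by (simp add: power_less_imp_less_base)
    qed
  qed
  then obtain p where kp: "k \<longlonglongrightarrow> p" using Cauchy_convergent_iff convergent_def by blast
  have pK: "p \<in> K" using closedK kK kp closed_sequentially by blast
  have p_min: "norm (u - p) \<le> norm (u - q)" if "q \<in> K" for q
  proof -
    have "(\<lambda>n. norm (u - k n)) \<longlonglongrightarrow> norm (u - p)" by (intro tendsto_intros kp)
    moreover have "(\<lambda>n. d + e n) \<longlonglongrightarrow> d + 0" unfolding e_def
      by (intro tendsto_intros) (use LIMSEQ_inverse_real_of_nat in \<open>simp add: inverse_eq_divide add.commute\<close>)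
    ultimately have "norm (u - p) \<le> d" 
      using kd by (intro LIMSEQ_le) (auto simp: e_def less_imp_le)
    thus ?thesis using d_le[OF that] by simp
  qed
  define w where "w = u - p"
  have fw: "f w = 1" using pK fu by (simp add: w_def f.diff K_def)
  have orth: "w \<bullet> q = 0" if "q \<in> K" for q
  proof -
    define s where "s = w \<bullet> q"
    define Q where "Q = q \<bullet> q"
    have Q: "Q \<ge> 0" by (simp add: Q_def)
    define t where "t = s / (Q + 1)"
    have "p + t *\<^sub>R q \<in> K" using pK that by (intro Kadd Ksc)
    hence "norm (u - p) \<le> norm (u - (p + t *\<^sub>R q))" by (rule p_min)
    hence "(norm w)\<^sup>2 \<le> (norm (w - t *\<^sub>R q))\<^sup>2" by (simp add: w_def power_mono algebra_simps)
    hence "0 \<le> t*t*Q - 2*t * s"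
      by (simp add: power2_norm_eq_inner inner_diff_left inner_diff_right s_def Q_def inner_commute algebra_simps)
    moreover have st: "s = t*(Q+1)" unfolding t_def using Q by simp
    ultimately have "0 \<le> - (t*t*(Q+2))" by (simp add: algebra_simps)
    hence "t*t*(Q+2) \<le> 0" by simp
    hence "t*t \<le> 0" using Q by (simp add: mult_le_0_iff)
    hence "t = 0" by (auto simp: mult_le_0_iff)
    hence "s = 0" using st by simp
    thus ?thesis by (simp add: s_def)
  qed
  have ww: "w \<bullet> w \<noteq> 0" using fw by auto
  show ?thesis
  proof (intro exI allI)
    fix x
    have "x - f x *\<^sub>R w \<in> K" using fw by (simp add: K_def f.diff f.scale)
    hence "w \<bullet> (x - f x *\<^sub>R w) = 0" by (rule orth)
    hence "x \<bullet> w = f x * (w \<bullet> w)" by (simp add: inner_diff_right inner_commute)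
    thus "f x = x \<bullet> (w /\<^sub>R (w \<bullet> w))" using ww by simp
  qed
qed

lemma adjoint_ok:
  fixes f :: "'a::{real_inner,complete_space} \<Rightarrow> 'b::real_inner"
  assumes bl: "bounded_linear f"
  shows "f x \<bullet> y = x \<bullet> adjoint f y"
proof -
  have "\<forall>y. \<exists>z. \<forall>x. f x \<bullet> y = x \<bullet> z"
  proof
    fix y
    have "bounded_linear (\<lambda>x. f x \<bullet> y)"
      using bounded_linear_compose[OF bounded_linear_inner_left bl] .
    thus "\<exists>z. \<forall>x. f x \<bullet> y = x \<bullet> z" by (rule riesz)
  qed
  then obtain g where g: "\<forall>y x. f x \<bullet> y = x \<bullet> g y" by metis
  hence ex: "\<exists>f'. \<forall>x y. f x \<bullet> y = x \<bullet> f' y" by blast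
  show ?thesis unfolding adjoint_def using someI_ex[OF ex] by blast
qed




lemma on_coord:
  fixes \<phi> :: "'l \<Rightarrow> 'h::real_inner"
  assumes on: "\<forall>i\<in>\<Lambda>. \<forall>j\<in>\<Lambda>. \<phi> i \<bullet> \<phi> j = (if i = j then 1 else 0)"
    and F: "finite F" "F \<subseteq> \<Lambda>" and k: "k \<in> \<Lambda>"
  shows "\<phi> k \<bullet> (\<Sum>l\<in>F. c l *\<^sub>R \<phi> l) = (if k \<in> F then c k else 0)"
proof -
  have "\<phi> k \<bullet> (\<Sum>l\<in>F. c l *\<^sub>R \<phi> l) = (\<Sum>l\<in>F. c l * (\<phi> k \<bullet> \<phi> l))"
    by (simp add: inner_sum_right)
  also have "\<dots> = (\<Sum>l\<in>F. if k = l then c l else 0)"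
    using on F k by (intro sum.cong refl) auto
  also have "\<dots> = (if k \<in> F then c k else 0)" using F by simp
  finally show ?thesis .
qed

lemma on_norm2:
  fixes \<phi> :: "'l \<Rightarrow> 'h::real_inner"
  assumes on: "\<forall>i\<in>\<Lambda>. \<forall>j\<in>\<Lambda>. \<phi> i \<bullet> \<phi> j = (if i = j then 1 else 0)"
    and F: "finite F" "F \<subseteq> \<Lambda>"
  shows "(norm (\<Sum>l\<in>F. c l *\<^sub>R \<phi> l))\<^sup>2 = (\<Sum>l\<in>F. (c l)\<^sup>2)"
proof -
  have "(norm (\<Sum>l\<in>F. c l *\<^sub>R \<phi> l))\<^sup>2 = (\<Sum>l\<in>F. c l * (\<phi> l \<bullet> (\<Sum>l\<in>F. c l *\<^sub>R \<phi> l)))"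
    by (simp add: power2_norm_eq_inner inner_sum_left)
  also have "\<dots> = (\<Sum>l\<in>F. (c l)\<^sup>2)"
    using on_coord[OF on F] F by (intro sum.cong refl) (auto simp: power2_eq_square)
  finally show ?thesis .
qed

lemma on_norm_le:
  fixes \<phi> :: "'l \<Rightarrow> 'h::real_inner"
  assumes on: "\<forall>i\<in>\<Lambda>. \<forall>j\<in>\<Lambda>. \<phi> i \<bullet> \<phi> j = (if i = j then 1 else 0)"
    and F: "F \<subseteq> \<Lambda>"
  shows "norm (\<Sum>l\<in>F. c l *\<^sub>R \<phi> l) \<le> (\<Sum>l\<in>F. \<bar>c l\<bar>)"
proof -
  have "norm (\<Sum>l\<in>F. c l *\<^sub>R \<phi> l) \<le> (\<Sum>l\<in>F. norm (c l *\<^sub>R \<phi> l))" by (rule norm_sum)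
  also have "\<dots> = (\<Sum>l\<in>F. \<bar>c l\<bar>)"
  proof (intro sum.cong refl)
    fix l assume "l \<in> F"
    hence "\<phi> l \<bullet> \<phi> l = 1" using on F by auto
    hence "norm (\<phi> l) = 1" by (simp add: norm_eq_sqrt_inner)
    thus "norm (c l *\<^sub>R \<phi> l) = \<bar>c l\<bar>" by simp
  qed
  finally show ?thesis .
qed

lemma bessel:
  fixes \<phi> :: "'l \<Rightarrow> 'h::real_inner"
  assumes on: "\<forall>i\<in>\<Lambda>. \<forall>j\<in>\<Lambda>. \<phi> i \<bullet> \<phi> j = (if i = j then 1 else 0)"
    and F: "finite F" "F \<subseteq> \<Lambda>"
  shows "(\<Sum>l\<in>F. (\<phi> l \<bullet> h)\<^sup>2) \<le> (norm h)\<^sup>2"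
proof -
  define p where "p = (\<Sum>l\<in>F. (\<phi> l \<bullet> h) *\<^sub>R \<phi> l)"
  have pq: "p \<bullet> q = (\<Sum>l\<in>F. (\<phi> l \<bullet> h) * (\<phi> l \<bullet> q))" for q
    unfolding p_def by (simp add: inner_sum_left)
  have "(h - p) \<bullet> p = (\<Sum>l\<in>F. (\<phi> l \<bullet> h) * (\<phi> l \<bullet> (h - p)))"
    by (simp only: inner_commute[of "h - p"] pq)
  also have "\<dots> = 0"
    using on_coord[OF on F, of _ "\<lambda>l. \<phi> l \<bullet> h"] F
    by (intro sum.neutral) (auto simp: inner_diff_right p_def)
  finally have orth: "(h - p) \<bullet> p = 0" .
  have "(norm h)\<^sup>2 = (norm (h - p))\<^sup>2 + (norm p)\<^sup>2"
  proof -
    have "h = (h - p) + p" by simp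
    hence "(norm h)\<^sup>2 = (norm ((h - p) + p))\<^sup>2" by simp
    also have "\<dots> = (norm (h - p))\<^sup>2 + (norm p)\<^sup>2"
      using orth by (intro norm_add_Pythagorean) (simp add: orthogonal_def)
    finally show ?thesis .
  qed
  moreover have "(norm p)\<^sup>2 = (\<Sum>l\<in>F. (\<phi> l \<bullet> h)\<^sup>2)" unfolding p_def by (rule on_norm2[OF on F])
  ultimately show ?thesis by simp
qed

lemma bessel_finite:
  fixes \<phi> :: "'l \<Rightarrow> 'h::real_inner"
  assumes on: "\<forall>i\<in>\<Lambda>. \<forall>j\<in>\<Lambda>. \<phi> i \<bullet> \<phi> j = (if i = j then 1 else 0)"
    and e: "e > 0"
  shows "finite {l\<in>\<Lambda>. \<bar>\<phi> l \<bullet> h\<bar> \<ge> e}"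
proof (rule ccontr)
  assume inf: "infinite {l\<in>\<Lambda>. \<bar>\<phi> l \<bullet> h\<bar> \<ge> e}"
  obtain n :: nat where n: "(norm h)\<^sup>2 / e\<^sup>2 < real n" using reals_Archimedean2 by blast
  obtain F where F: "finite F" "F \<subseteq> {l\<in>\<Lambda>. \<bar>\<phi> l \<bullet> h\<bar> \<ge> e}" "card F = n"
    using infinite_arbitrarily_large[OF inf] by blast
  have "real n * e\<^sup>2 = (\<Sum>l\<in>F. e\<^sup>2)" using F by simp
  also have "\<dots> \<le> (\<Sum>l\<in>F. (\<phi> l \<bullet> h)\<^sup>2)"
  proof (intro sum_mono)
    fix l assume "l \<in> F"
    hence "e \<le> \<bar>\<phi> l \<bullet> h\<bar>" using F by auto
    hence "e\<^sup>2 \<le> \<bar>\<phi> l \<bullet> h\<bar>\<^sup>2" using e by (intro power_mono) auto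
    thus "e\<^sup>2 \<le> (\<phi> l \<bullet> h)\<^sup>2" by simp
  qed
  also have "\<dots> \<le> (norm h)\<^sup>2" using F by (intro bessel[OF on]) auto
  finally have "real n * e\<^sup>2 \<le> (norm h)\<^sup>2" .
  moreover have "(norm h)\<^sup>2 < real n * e\<^sup>2" using n e by (simp add: field_simps)
  ultimately show False by simp
qed

lemma approx_norm:
  fixes \<phi> :: "'l \<Rightarrow> 'h::real_inner"
  assumes onb: "orthonormal_basis \<Lambda> \<phi>"
    and B: "\<And>F. finite F \<Longrightarrow> F \<subseteq> \<Lambda> \<Longrightarrow> (\<Sum>l\<in>F. \<bar>\<phi> l \<bullet> g\<bar>) \<le> B"
  shows "norm g \<le> B"
proof (rule field_le_epsilon)
  fix eps :: real assume eps: "eps > 0"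
  have on: "\<forall>i\<in>\<Lambda>. \<forall>j\<in>\<Lambda>. \<phi> i \<bullet> \<phi> j = (if i = j then 1 else 0)"
    and cl: "closure (span (\<phi> ` \<Lambda>)) = UNIV" using onb by (auto simp: orthonormal_basis_def)
  have "g \<in> closure (span (\<phi> ` \<Lambda>))" using cl by simp
  then obtain s where s: "s \<in> span (\<phi> ` \<Lambda>)" "dist s g < eps"
    using closure_approachable eps by blast
  obtain T r where T: "finite T" "T \<subseteq> \<phi> ` \<Lambda>" and sT: "s = (\<Sum>a\<in>T. r a *\<^sub>R a)"
    using s(1) unfolding span_explicit by blast
  obtain F where F: "F \<subseteq> \<Lambda>" "T = \<phi> ` F" "finite F"
    using T finite_subset_image by metis
  have inj: "inj_on \<phi> \<Lambda>"
  proof (rule inj_onI)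
    fix i j assume "i \<in> \<Lambda>" "j \<in> \<Lambda>" "\<phi> i = \<phi> j"
    hence "\<phi> i \<bullet> \<phi> j = 1" using on by (metis one_neq_zero)
    thus "i = j" using on \<open>i \<in> \<Lambda>\<close> \<open>j \<in> \<Lambda>\<close> by (metis zero_neq_one)
  qed
  define c where "c = (\<lambda>l. r (\<phi> l))"
  have sF: "s = (\<Sum>l\<in>F. c l *\<^sub>R \<phi> l)"
    unfolding sT F(2) c_def by (subst sum.reindex) (use inj F(1) in \<open>auto intro: inj_on_subset\<close>)
  define s' where "s' = (\<Sum>l\<in>F. (\<phi> l \<bullet> g) *\<^sub>R \<phi> l)"
  have coord: "\<phi> l \<bullet> (g - s') = 0" if "l \<in> F" for l
    using on_coord[OF on F(3) F(1), of l "\<lambda>l. \<phi> l \<bullet> g"] that F(1)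
    by (auto simp: inner_diff_right s'_def)
  have ss: "s' - s = (\<Sum>l\<in>F. ((\<phi> l \<bullet> g) - c l) *\<^sub>R \<phi> l)"
    unfolding s'_def sF by (simp add: sum_subtractf scaleR_diff_left)
  have "(g - s') \<bullet> (s' - s) = (\<Sum>l\<in>F. ((\<phi> l \<bullet> g) - c l) * (\<phi> l \<bullet> (g - s')))"
    unfolding ss by (simp add: inner_sum_right inner_commute)
  also have "\<dots> = 0" using coord by simp
  finally have orth: "(g - s') \<bullet> (s' - s) = 0" .
  have "(norm (g - s))\<^sup>2 = (norm ((g - s') + (s' - s)))\<^sup>2" by simp
  also have "\<dots> = (norm (g - s'))\<^sup>2 + (norm (s' - s))\<^sup>2"
    using orth by (intro norm_add_Pythagorean) (simp add: orthogonal_def)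
  finally have "(norm (g - s'))\<^sup>2 \<le> (norm (g - s))\<^sup>2" by simp
  hence gs': "norm (g - s') \<le> norm (g - s)" by (simp add: power2_le_iff_abs_le)
  have "norm g \<le> norm (g - s') + norm s'" using norm_triangle_ineq[of "g - s'" s'] by simp
  also have "norm s' \<le> (\<Sum>l\<in>F. \<bar>\<phi> l \<bullet> g\<bar>)" unfolding s'_def by (rule on_norm_le[OF on F(1)])
  also have "\<dots> \<le> B" using B F by simp
  finally show "norm g \<le> B + eps" using gs' s(2) by (simp add: dist_norm norm_minus_commute)
qed




lemma wl1_nonneg: "0 \<le> wl1 \<Lambda> \<phi> \<kappa> h" by (simp add: wl1_def)

lemma wl1_zero: "wl1 \<Lambda> \<phi> \<kappa> 0 = 0" by (simp add: wl1_def zero_ennreal.rep_eq)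

lemma wl1_real:
  assumes "wl1 \<Lambda> \<phi> \<kappa> h \<noteq> \<infinity>"
  shows "wl1 \<Lambda> \<phi> \<kappa> h = ereal (real_of_ereal (wl1 \<Lambda> \<phi> \<kappa> h))"
  using assms wl1_nonneg[of \<Lambda> \<phi> \<kappa> h] by (cases "wl1 \<Lambda> \<phi> \<kappa> h") auto

lemma wl1_split:
  fixes \<phi> :: "'l \<Rightarrow> 'h::real_inner"
  assumes on: "\<forall>i\<in>\<Lambda>. \<forall>j\<in>\<Lambda>. \<phi> i \<bullet> \<phi> j = (if i = j then 1 else 0)"
    and F: "finite F" "F \<subseteq> \<Lambda>" and kp: "\<forall>l\<in>\<Lambda>. \<kappa> l \<ge> 0"
  shows "wl1 \<Lambda> \<phi> \<kappa> w = wl1 \<Lambda> \<phi> \<kappa> (w - (\<Sum>l\<in>F. (\<phi> l \<bullet> w) *\<^sub>R \<phi> l)) + ereal (\<Sum>l\<in>F. \<kappa> l * \<bar>\<phi> l \<bullet> w\<bar>)"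
proof -
  define z where "z = w - (\<Sum>l\<in>F. (\<phi> l \<bullet> w) *\<^sub>R \<phi> l)"
  have zc: "\<phi> k \<bullet> z = (if k \<in> F then 0 else \<phi> k \<bullet> w)" if "k \<in> \<Lambda>" for k
    using on_coord[OF on F that, of "\<lambda>l. \<phi> l \<bullet> w"] by (simp add: z_def inner_diff_right)
  define fw where "fw = (\<lambda>l. ennreal (\<kappa> l * \<bar>\<phi> l \<bullet> w\<bar>))"
  define fz where "fz = (\<lambda>l. ennreal (\<kappa> l * \<bar>\<phi> l \<bullet> z\<bar>))"
  have U: "\<Lambda> = (\<Lambda> - F) \<union> F" using F by auto
  have sm: "f summable_on X" for f :: "'l \<Rightarrow> ennreal" and X
    by (rule nonneg_summable_on_complete) simp
  have "infsum fw \<Lambda> = infsum fw (\<Lambda> - F) + infsum fw F"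
    by (subst U, rule infsum_Un_disjoint) (auto intro: sm)
  also have "infsum fw F = ennreal (\<Sum>l\<in>F. \<kappa> l * \<bar>\<phi> l \<bullet> w\<bar>)"
    using F kp by (auto simp: fw_def intro!: sum_ennreal)
  finally have 1: "infsum fw \<Lambda> = infsum fw (\<Lambda> - F) + ennreal (\<Sum>l\<in>F. \<kappa> l * \<bar>\<phi> l \<bullet> w\<bar>)" .
  have "infsum fz \<Lambda> = infsum fz (\<Lambda> - F) + infsum fz F"
    by (subst U, rule infsum_Un_disjoint) (auto intro: sm)
  also have "infsum fz F = 0" using F zc by (auto simp: fz_def)
  also have "infsum fz (\<Lambda> - F) = infsum fw (\<Lambda> - F)"
    using zc by (intro infsum_cong) (auto simp: fz_def fw_def)
  finally have 2: "infsum fz \<Lambda> = infsum fw (\<Lambda> - F)" by simp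
  have nn: "0 \<le> (\<Sum>l\<in>F. \<kappa> l * \<bar>\<phi> l \<bullet> w\<bar>)" using F kp by (intro sum_nonneg) auto
  show ?thesis unfolding wl1_def z_def[symmetric] fw_def[symmetric] fz_def[symmetric] 1 2
    using nn by (simp add: plus_ennreal.rep_eq)
qed

lemma subdiff_wl1:
  fixes \<phi> :: "'l \<Rightarrow> 'h::real_inner"
  assumes on: "\<forall>i\<in>\<Lambda>. \<forall>j\<in>\<Lambda>. \<phi> i \<bullet> \<phi> j = (if i = j then 1 else 0)"
    and kp: "\<forall>l\<in>\<Lambda>. \<kappa> l > 0"
    and eta: "\<eta> \<in> subdiff (wl1 \<Lambda> \<phi> \<kappa>) v"
  shows "wl1 \<Lambda> \<phi> \<kappa> v \<noteq> \<infinity>"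
    and "\<And>l. l \<in> \<Lambda> \<Longrightarrow> \<bar>\<phi> l \<bullet> \<eta>\<bar> \<le> \<kappa> l"
    and "\<And>l. l \<in> \<Lambda> \<Longrightarrow> \<bar>\<phi> l \<bullet> \<eta>\<bar> \<noteq> \<kappa> l \<Longrightarrow> \<phi> l \<bullet> v = 0"
    and "\<And>u F. wl1 \<Lambda> \<phi> \<kappa> u \<noteq> \<infinity> \<Longrightarrow> finite F \<Longrightarrow> F \<subseteq> \<Lambda> \<Longrightarrow>
           ereal (\<Sum>l\<in>F. \<kappa> l * \<bar>\<phi> l \<bullet> u\<bar> - (\<phi> l \<bullet> \<eta>) * (\<phi> l \<bullet> u))
           \<le> wl1 \<Lambda> \<phi> \<kappa> u - wl1 \<Lambda> \<phi> \<kappa> v - ereal (\<eta> \<bullet> (u - v))"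
proof -
  have kp': "\<forall>l\<in>\<Lambda>. \<kappa> l \<ge> 0" using kp by (simp add: less_imp_le)
  have sd: "wl1 \<Lambda> \<phi> \<kappa> z \<ge> wl1 \<Lambda> \<phi> \<kappa> v + ereal (\<eta> \<bullet> (z - v))" for z
    using eta by (simp add: subdiff_def)
  show fin: "wl1 \<Lambda> \<phi> \<kappa> v \<noteq> \<infinity>"
  proof
    assume "wl1 \<Lambda> \<phi> \<kappa> v = \<infinity>"
    with sd[of 0] show False by (simp add: wl1_zero)
  qed
  define Lv where "Lv = real_of_ereal (wl1 \<Lambda> \<phi> \<kappa> v)"
  have Lv: "wl1 \<Lambda> \<phi> \<kappa> v = ereal Lv" unfolding Lv_def by (rule wl1_real[OF fin])
  show gen: "ereal (\<Sum>l\<in>F. \<kappa> l * \<bar>\<phi> l \<bullet> u\<bar> - (\<phi> l \<bullet> \<eta>) * (\<phi> l \<bullet> u))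
           \<le> wl1 \<Lambda> \<phi> \<kappa> u - wl1 \<Lambda> \<phi> \<kappa> v - ereal (\<eta> \<bullet> (u - v))"
    if fu: "wl1 \<Lambda> \<phi> \<kappa> u \<noteq> \<infinity>" and F: "finite F" "F \<subseteq> \<Lambda>" for u F
  proof -
    define z where "z = u - (\<Sum>l\<in>F. (\<phi> l \<bullet> u) *\<^sub>R \<phi> l)"
    define S where "S = (\<Sum>l\<in>F. \<kappa> l * \<bar>\<phi> l \<bullet> u\<bar>)"
    define Lu where "Lu = real_of_ereal (wl1 \<Lambda> \<phi> \<kappa> u)"
    have Lu: "wl1 \<Lambda> \<phi> \<kappa> u = ereal Lu" unfolding Lu_def by (rule wl1_real[OF fu])
    have spl: "ereal Lu = wl1 \<Lambda> \<phi> \<kappa> z + ereal S"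
      using wl1_split[OF on F kp', of u] Lu by (simp add: z_def S_def)
    have Lz: "wl1 \<Lambda> \<phi> \<kappa> z = ereal (Lu - S)"
      using spl wl1_nonneg[of \<Lambda> \<phi> \<kappa> z] by (cases "wl1 \<Lambda> \<phi> \<kappa> z") auto
    have "ereal (Lu - S) \<ge> ereal Lv + ereal (\<eta> \<bullet> (z - v))" using sd[of z] Lz Lv by simp
    hence ineq: "Lu - S \<ge> Lv + \<eta> \<bullet> (z - v)" by simp
    have "\<eta> \<bullet> (z - v) = \<eta> \<bullet> (u - v) - (\<Sum>l\<in>F. (\<phi> l \<bullet> u) * (\<phi> l \<bullet> \<eta>))"
      by (simp add: z_def inner_diff_right inner_sum_right inner_commute)
    with ineq have "S - (\<Sum>l\<in>F. (\<phi> l \<bullet> \<eta>) * (\<phi> l \<bullet> u)) \<le> Lu - Lv - \<eta> \<bullet> (u - v)"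
      by (simp add: algebra_simps)
    moreover have "(\<Sum>l\<in>F. \<kappa> l * \<bar>\<phi> l \<bullet> u\<bar> - (\<phi> l \<bullet> \<eta>) * (\<phi> l \<bullet> u)) = S - (\<Sum>l\<in>F. (\<phi> l \<bullet> \<eta>) * (\<phi> l \<bullet> u))"
      by (simp add: S_def sum_subtractf)
    ultimately show ?thesis using Lu Lv by simp
  qed
  have ci: "\<kappa> l * \<bar>\<phi> l \<bullet> v + t\<bar> \<ge> \<kappa> l * \<bar>\<phi> l \<bullet> v\<bar> + t * (\<phi> l \<bullet> \<eta>)" if l: "l \<in> \<Lambda>" for l t
  proof -
    have Fl: "finite {l}" "{l} \<subseteq> \<Lambda>" using l by auto
    have pp: "\<phi> l \<bullet> \<phi> l = 1" using on l by auto
    define w where "w = v + t *\<^sub>R \<phi> l"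
    have wl: "\<phi> l \<bullet> w = \<phi> l \<bullet> v + t" using pp by (simp add: w_def inner_add_right pp)
    define z0 where "z0 = v - (\<phi> l \<bullet> v) *\<^sub>R \<phi> l"
    have wz: "w - (\<phi> l \<bullet> w) *\<^sub>R \<phi> l = z0" unfolding wl by (simp add: w_def z0_def algebra_simps)
    have s1: "wl1 \<Lambda> \<phi> \<kappa> w = wl1 \<Lambda> \<phi> \<kappa> z0 + ereal (\<kappa> l * \<bar>\<phi> l \<bullet> v + t\<bar>)"
      using wl1_split[OF on Fl kp', of w] wz wl by simp
    have s2: "wl1 \<Lambda> \<phi> \<kappa> v = wl1 \<Lambda> \<phi> \<kappa> z0 + ereal (\<kappa> l * \<bar>\<phi> l \<bullet> v\<bar>)"
      using wl1_split[OF on Fl kp', of v] by (simp add: z0_def)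
    have z0fin: "wl1 \<Lambda> \<phi> \<kappa> z0 = ereal (Lv - \<kappa> l * \<bar>\<phi> l \<bullet> v\<bar>)"
      using s2 Lv wl1_nonneg[of \<Lambda> \<phi> \<kappa> z0] by (cases "wl1 \<Lambda> \<phi> \<kappa> z0") auto
    have "\<eta> \<bullet> (w - v) = t * (\<phi> l \<bullet> \<eta>)" by (simp add: w_def inner_commute)
    with sd[of w] s1 z0fin Lv show ?thesis by simp
  qed
  show "\<bar>\<phi> l \<bullet> \<eta>\<bar> \<le> \<kappa> l" if l: "l \<in> \<Lambda>" for l
  proof -
    have a1: "\<kappa> l * \<bar>\<phi> l \<bullet> v + 1\<bar> \<ge> \<kappa> l * \<bar>\<phi> l \<bullet> v\<bar> + (\<phi> l \<bullet> \<eta>)" using ci[OF l, of 1] by simp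
    have a2: "\<kappa> l * \<bar>\<phi> l \<bullet> v + -1\<bar> \<ge> \<kappa> l * \<bar>\<phi> l \<bullet> v\<bar> - (\<phi> l \<bullet> \<eta>)" using ci[OF l, of "-1"] by simp
    have k: "\<kappa> l > 0" using kp l by auto
    have b1: "\<kappa> l * \<bar>\<phi> l \<bullet> v + 1\<bar> \<le> \<kappa> l * \<bar>\<phi> l \<bullet> v\<bar> + \<kappa> l"
      using mult_left_mono[OF abs_triangle_ineq[of "\<phi> l \<bullet> v" 1], of "\<kappa> l"] k by (simp add: distrib_left)
    have b2: "\<kappa> l * \<bar>\<phi> l \<bullet> v + -1\<bar> \<le> \<kappa> l * \<bar>\<phi> l \<bullet> v\<bar> + \<kappa> l"
      using mult_left_mono[OF abs_triangle_ineq[of "\<phi> l \<bullet> v" "-1"], of "\<kappa> l"] k by (simp add: distrib_left)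
    show ?thesis using a1 a2 b1 b2 by linarith
  qed
  show "\<phi> l \<bullet> v = 0" if l: "l \<in> \<Lambda>" and ne: "\<bar>\<phi> l \<bullet> \<eta>\<bar> \<noteq> \<kappa> l" for l
  proof (rule ccontr)
    assume nz: "\<phi> l \<bullet> v \<noteq> 0"
    have "\<bar>\<phi> l \<bullet> \<eta>\<bar> \<le> \<kappa> l" using \<open>\<And>l. l \<in> \<Lambda> \<Longrightarrow> \<bar>\<phi> l \<bullet> \<eta>\<bar> \<le> \<kappa> l\<close> l by blast
    hence lt: "\<bar>\<phi> l \<bullet> \<eta>\<bar> < \<kappa> l" using ne by simp
    have "0 \<ge> \<kappa> l * \<bar>\<phi> l \<bullet> v\<bar> - (\<phi> l \<bullet> v) * (\<phi> l \<bullet> \<eta>)" using ci[OF l, of "- (\<phi> l \<bullet> v)"] by simp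
    moreover have "(\<phi> l \<bullet> v) * (\<phi> l \<bullet> \<eta>) \<le> \<bar>\<phi> l \<bullet> v\<bar> * \<bar>\<phi> l \<bullet> \<eta>\<bar>"
      by (metis abs_ge_self abs_mult)
    moreover have "\<bar>\<phi> l \<bullet> v\<bar> * \<bar>\<phi> l \<bullet> \<eta>\<bar> < \<bar>\<phi> l \<bullet> v\<bar> * \<kappa> l"
      using nz lt by (intro mult_strict_left_mono) auto
    ultimately show False by (simp add: mult.commute)
  qed
qed




lemma orth_sum_coord:
  fixes E :: "'a::real_inner set"
  assumes E: "finite E" "pairwise orthogonal E" and b: "b \<in> E"
  shows "b \<bullet> (\<Sum>c\<in>E. (c \<bullet> y / (c \<bullet> c)) *\<^sub>R c) = b \<bullet> y"
proof -
  have "b \<bullet> (\<Sum>c\<in>E. (c \<bullet> y / (c \<bullet> c)) *\<^sub>R c) = (\<Sum>c\<in>E. (c \<bullet> y / (c \<bullet> c)) * (b \<bullet> c))"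
    by (simp add: inner_sum_right)
  also have "\<dots> = (\<Sum>c\<in>E. if c = b then (b \<bullet> y / (b \<bullet> b)) * (b \<bullet> b) else 0)"
    using E(2) b by (intro sum.cong refl) (auto simp: pairwise_def orthogonal_def)
  also have "\<dots> = (b \<bullet> y / (b \<bullet> b)) * (b \<bullet> b)" using E(1) b by simp
  also have "\<dots> = b \<bullet> y" by (cases "b = 0") auto
  finally show ?thesis .
qed

lemma GS:
  fixes T :: "'a::real_inner set"
  assumes "finite T"
  shows "\<exists>E. finite E \<and> pairwise orthogonal E \<and> span E = span T"
  using assms
proof (induction T)
  case empty then show ?case by (intro exI[of _ "{}"]) auto
next
  case (insert a T)
  then obtain E where E: "finite E" "pairwise orthogonal E" "span E = span T" by blast
  define a' where "a' = a - (\<Sum>c\<in>E. (c \<bullet> a / (c \<bullet> c)) *\<^sub>R c)"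
  have o: "orthogonal a' b" if "b \<in> E" for b
    using orth_sum_coord[OF E(1,2) that, of a]
    by (simp add: orthogonal_def a'_def inner_diff_right inner_commute)
  have po: "pairwise orthogonal (insert a' E)"
    by (rule pairwise_orthogonal_insert[OF E(2)]) (use o in auto)
  have "a' - a \<in> span E" unfolding a'_def
    by (simp add: span_neg span_sum span_base span_mul)
  hence "span (insert a' E) = span (insert a E)"
    by (rule eq_span_insert_eq)
  also have "\<dots> = span (insert a T)" using E(3) by (simp add: span_insert)
  finally show ?case using po E(1) by blast
qed

lemma orth_expand:
  fixes E :: "'a::real_inner set"
  assumes E: "finite E" "pairwise orthogonal E" and y: "y \<in> span E"
  shows "y = (\<Sum>b\<in>E. (b \<bullet> y / (b \<bullet> b)) *\<^sub>R b)"
proof -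
  define r where "r = y - (\<Sum>b\<in>E. (b \<bullet> y / (b \<bullet> b)) *\<^sub>R b)"
  have "orthogonal r b" if "b \<in> E" for b
  proof -
    have "b \<bullet> r = 0" using orth_sum_coord[OF E that, of y] by (simp add: r_def inner_diff_right)
    thus ?thesis by (simp add: orthogonal_def inner_commute)
  qed
  moreover have "r \<in> span E" unfolding r_def
    using y by (simp add: span_diff span_sum span_base span_mul)
  ultimately have "orthogonal r r" using orthogonal_to_span[of r E r] by (auto simp: orthogonal_commute)
  hence "r = 0" by (simp add: orthogonal_def)
  thus ?thesis by (simp add: r_def)
qed

lemma inv_bound:
  fixes A :: "'h::real_inner \<Rightarrow> 'y::real_inner"
  assumes lin: "linear A" and S: "finite S" and inj: "inj_on A (span S)"
  shows "\<exists>K\<ge>0. \<forall>p\<in>span S. norm p \<le> K * norm (A p)"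
proof -
  obtain E where E: "finite E" "pairwise orthogonal E" "span E = span (A ` S)"
    using GS[of "A ` S"] S by blast
  have spA: "span (A ` S) = A ` span S" using span_linear_image[OF lin] by simp
  define q where "q = (\<lambda>b. the_inv_into (span S) A b)"
  have qS: "q b \<in> span S" and Aq: "A (q b) = b" if "b \<in> E" for b
  proof -
    have "b \<in> A ` span S" using that E(3) spA span_base[of b E] by auto
    thus "q b \<in> span S" "A (q b) = b" unfolding q_def
      using inj by (auto intro: the_inv_into_into f_the_inv_into_f)
  qed
  define K where "K = (\<Sum>b\<in>E. norm (q b) / norm b)"
  have K0: "K \<ge> 0" unfolding K_def by (intro sum_nonneg) auto
  have "norm p \<le> K * norm (A p)" if p: "p \<in> span S" for p
  proof -
    define y where "y = A p"
    have yE: "y \<in> span E" using E(3) spA p by (auto simp: y_def)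
    define p' where "p' = (\<Sum>b\<in>E. (b \<bullet> y / (b \<bullet> b)) *\<^sub>R q b)"
    have p'S: "p' \<in> span S" unfolding p'_def using qS by (intro span_sum span_mul) auto
    have "A p' = (\<Sum>b\<in>E. (b \<bullet> y / (b \<bullet> b)) *\<^sub>R A (q b))"
      unfolding p'_def by (simp add: linear_sum[OF lin] linear_scale[OF lin])
    also have "\<dots> = (\<Sum>b\<in>E. (b \<bullet> y / (b \<bullet> b)) *\<^sub>R b)" using Aq by simp
    also have "\<dots> = y" using orth_expand[OF E(1,2) yE] by simp
    finally have "A p' = A p" by (simp add: y_def)
    hence pp: "p' = p" using inj p'S p by (auto dest: inj_onD)
    have "norm p = norm p'" by (simp add: pp)
    also have "\<dots> \<le> (\<Sum>b\<in>E. norm ((b \<bullet> y / (b \<bullet> b)) *\<^sub>R q b))" unfolding p'_def by (rule norm_sum)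
    also have "\<dots> \<le> (\<Sum>b\<in>E. norm y * (norm (q b) / norm b))"
    proof (intro sum_mono)
      fix b assume "b \<in> E"
      show "norm ((b \<bullet> y / (b \<bullet> b)) *\<^sub>R q b) \<le> norm y * (norm (q b) / norm b)"
      proof (cases "b = 0")
        case True then show ?thesis by simp
      next
        case False
        have bb: "b \<bullet> b = (norm b)\<^sup>2" by (simp add: power2_norm_eq_inner)
        have nb: "norm b > 0" using False by simp
        have "norm ((b \<bullet> y / (b \<bullet> b)) *\<^sub>R q b) = \<bar>b \<bullet> y\<bar> / (norm b)\<^sup>2 * norm (q b)"
          by (simp add: bb)
        also have "\<dots> \<le> (norm b * norm y) / (norm b)\<^sup>2 * norm (q b)"
          by (intro mult_right_mono divide_right_mono Cauchy_Schwarz_ineq2) auto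
        also have "\<dots> = norm y * (norm (q b) / norm b)" using nb by (simp add: power2_eq_square field_simps)
        finally show ?thesis .
      qed
    qed
    also have "\<dots> = K * norm (A p)" by (simp add: K_def sum_distrib_left y_def mult.commute)
    finally show ?thesis .
  qed
  with K0 show ?thesis by blast
qed

lemma inv_opnorm_props:
  fixes A :: "'h::real_inner \<Rightarrow> 'y::real_inner"
  assumes lin: "linear A" and S: "finite S" and inj: "inj_on A (span S)"
  shows "0 \<le> inv_opnorm A (span S)"
    and "\<And>p. p \<in> span S \<Longrightarrow> norm p \<le> inv_opnorm A (span S) * norm (A p)"
proof -
  obtain K where K0: "K \<ge> 0" and K: "\<And>p. p \<in> span S \<Longrightarrow> norm p \<le> K * norm (A p)"
    using inv_bound[OF assms] by blast
  define Y where "Y = {y \<in> A ` span S. norm y \<le> 1}"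
  define T where "T = (\<lambda>y. the_inv_into (span S) A y)"
  have TS: "T y \<in> span S" and AT: "A (T y) = y" if "y \<in> A ` span S" for y
    using that inj unfolding T_def by (auto intro: the_inv_into_into f_the_inv_into_f)
  have bdd: "bdd_above ((\<lambda>y. norm (T y)) ` Y)"
  proof (rule bdd_aboveI2)
    fix y assume "y \<in> Y"
    hence y: "y \<in> A ` span S" "norm y \<le> 1" by (auto simp: Y_def)
    have "norm (T y) \<le> K * norm (A (T y))" using K TS[OF y(1)] by blast
    also have "\<dots> = K * norm y" using AT[OF y(1)] by simp
    also have "\<dots> \<le> K" using K0 y(2) by (simp add: mult_left_le)
    finally show "norm (T y) \<le> K" .
  qed
  have A0: "A 0 = 0" by (simp add: linear_0[OF lin])
  have T0: "T 0 = 0" unfolding T_def using inj A0 by (intro the_inv_into_f_eq) (auto simp: span_zero)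
  have Y0: "0 \<in> Y" using A0 by (auto simp: Y_def intro!: image_eqI[of 0 _ 0] span_zero)
  have io: "inv_opnorm A (span S) = Sup ((\<lambda>y. norm (T y)) ` Y)"
    by (simp add: inv_opnorm_def T_def Y_def)
  show nn: "0 \<le> inv_opnorm A (span S)" unfolding io
    using cSup_upper[OF imageI[OF Y0] bdd] T0 by simp
  show "norm p \<le> inv_opnorm A (span S) * norm (A p)" if p: "p \<in> span S" for p
  proof (cases "A p = 0")
    case True
    hence "p = 0" using inj_onD[OF inj, of p 0] p A0 by (simp add: span_zero)
    thus ?thesis using A0 by simp
  next
    case False
    define c where "c = norm (A p)"
    have c: "c > 0" using False by (simp add: c_def)
    define y where "y = A (p /\<^sub>R c)"
    have pc: "p /\<^sub>R c \<in> span S" using p by (simp add: span_mul)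
    have ny: "norm y = 1" unfolding y_def using c by (simp add: linear_scale[OF lin] c_def)
    have yY: "y \<in> Y" unfolding Y_def using pc ny by (auto simp: y_def)
    have "T y = p /\<^sub>R c" unfolding T_def y_def using inj pc by (intro the_inv_into_f_eq) auto
    hence "norm p / c \<le> inv_opnorm A (span S)" unfolding io
      using cSup_upper[OF imageI[OF yY] bdd] c by (simp add: divide_inverse mult.commute)
    thus ?thesis using c by (simp add: c_def divide_le_eq mult.commute)
  qed
qed


theorem mainTheorem2:
  fixes W :: "'x::{real_inner,complete_space} \<Rightarrow> 'h::{real_inner,complete_space}"
    and A :: "'h \<Rightarrow> 'y::{real_inner,complete_space}"
    and R :: "'x \<Rightarrow> ereal"
    and \<Lambda> :: "'l set" and \<phi> :: "'l \<Rightarrow> 'h" and \<kappa> :: "'l \<Rightarrow> real" and a :: real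
    and x_star :: 'x and y_star :: 'y and \<nu> :: 'y and \<xi> :: 'x and \<eta> :: 'h
    and C :: real
  assumes sepX: "separable_space (euclidean :: 'x topology)"
    and sepH: "separable_space (euclidean :: 'h topology)"
    and sepY: "separable_space (euclidean :: 'y topology)"
    and W: "bounded_linear W" and A: "bounded_linear A"
    and R_nonneg: "\<forall>x. R x \<ge> 0"
    and R_proper: "proper_fun R" and R_convex: "convex_ereal R" and R_lsc: "weakly_lsc R"
    and \<Lambda>_countable: "countable \<Lambda>" and onb: "orthonormal_basis \<Lambda> \<phi>"
    and a_pos: "a > 0" and \<kappa>_ge: "\<forall>l\<in>\<Lambda>. \<kappa> l \<ge> a"
    and dom: "\<exists>x. R x + wl1 \<Lambda> \<phi> \<kappa> (W x) < \<infinity>"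
    and c21: "A (W x_star) = y_star"
    and c22: "adjoint W (adjoint A \<nu>) \<in> subdiff (\<lambda>x. R x + wl1 \<Lambda> \<phi> \<kappa> (W x)) x_star"
    and c23: "\<xi> \<in> subdiff R x_star" "\<eta> \<in> subdiff (wl1 \<Lambda> \<phi> \<kappa>) (W x_star)"
             "adjoint W (adjoint A \<nu>) = \<xi> + adjoint W \<eta>"
    and c24: "inj_on A (span (\<phi> ` Omega \<Lambda> \<phi> \<kappa> \<eta>))"
    and C_pos: "C > 0"
  shows "\<forall>\<delta> y_delta x_ad. \<delta> > 0 \<longrightarrow> norm (y_delta - y_star) \<le> \<delta> \<longrightarrow>
      (\<forall>x. ereal (1/2 * (norm (A (W x_ad) - y_delta))\<^sup>2)
             + ereal (C * \<delta>) * (R x_ad + wl1 \<Lambda> \<phi> \<kappa> (W x_ad))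
           \<le> ereal (1/2 * (norm (A (W x) - y_delta))\<^sup>2)
             + ereal (C * \<delta>) * (R x + wl1 \<Lambda> \<phi> \<kappa> (W x))) \<longrightarrow>
      bregman R \<xi> x_ad x_star \<le> ereal (c_const C (norm \<nu>) * \<delta>) \<and>
      norm (W x_ad - W x_star) \<le>
        d_const C (norm \<nu>) (inv_opnorm A (span (\<phi> ` Omega \<Lambda> \<phi> \<kappa> \<eta>))) (onorm A)
          (\<Lambda> = Omega \<Lambda> \<phi> \<kappa> \<eta>) (m_eta \<Lambda> \<phi> \<kappa> \<eta>) * \<delta>"
proof (intro allI impI)
  fix \<delta> :: real and y_delta :: 'y and x_ad :: 'x
  assume \<delta>: "\<delta> > 0" and yd: "norm (y_delta - y_star) \<le> \<delta>"
  assume mini: "\<forall>x. ereal (1/2 * (norm (A (W x_ad) - y_delta))\<^sup>2)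
             + ereal (C * \<delta>) * (R x_ad + wl1 \<Lambda> \<phi> \<kappa> (W x_ad))
           \<le> ereal (1/2 * (norm (A (W x) - y_delta))\<^sup>2)
             + ereal (C * \<delta>) * (R x + wl1 \<Lambda> \<phi> \<kappa> (W x))"
  interpret Wb: bounded_linear W by fact
  interpret Ab: bounded_linear A by fact
  have on: "\<forall>i\<in>\<Lambda>. \<forall>j\<in>\<Lambda>. \<phi> i \<bullet> \<phi> j = (if i = j then 1 else 0)"
    using onb by (simp add: orthonormal_basis_def)
  have kp: "\<forall>l\<in>\<Lambda>. \<kappa> l > 0" using \<kappa>_ge a_pos by force
  define Om where "Om = Omega \<Lambda> \<phi> \<kappa> \<eta>"
  define v where "v = W x_star"
  define N where "N = norm \<nu>"
  define \<alpha> where "\<alpha> = C * \<delta>"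
  have \<alpha>: "\<alpha> > 0" using C_pos \<delta> by (simp add: \<alpha>_def)
  have N0: "N \<ge> 0" by (simp add: N_def)
  note sw = subdiff_wl1[OF on kp c23(2)]
  have Rs_fin: "R x_star \<noteq> \<infinity>"
  proof
    assume inf: "R x_star = \<infinity>"
    obtain x0 where "R x0 < \<infinity>" using R_proper by (auto simp: proper_fun_def)
    moreover have "R x0 \<ge> R x_star + ereal (\<xi> \<bullet> (x0 - x_star))" using c23(1) by (simp add: subdiff_def)
    ultimately show False using inf by simp
  qed
  define Rs where "Rs = real_of_ereal (R x_star)"
  have Rs: "R x_star = ereal Rs" using Rs_fin R_nonneg[rule_format, of x_star]
    unfolding Rs_def by (cases "R x_star") auto
  define Ls where "Ls = real_of_ereal (wl1 \<Lambda> \<phi> \<kappa> v)"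
  have Ls: "wl1 \<Lambda> \<phi> \<kappa> v = ereal Ls" unfolding Ls_def v_def using sw(1) by (rule wl1_real)
  have m1: "ereal (1/2 * (norm (A (W x_ad) - y_delta))\<^sup>2) + ereal \<alpha> * (R x_ad + wl1 \<Lambda> \<phi> \<kappa> (W x_ad))
      \<le> ereal (1/2 * (norm (y_star - y_delta))\<^sup>2 + \<alpha> * (Rs + Ls))"
    using mini[rule_format, of x_star] c21 Rs Ls by (simp add: \<alpha>_def v_def)
  have S_fin: "R x_ad + wl1 \<Lambda> \<phi> \<kappa> (W x_ad) \<noteq> \<infinity>"
  proof
    assume "R x_ad + wl1 \<Lambda> \<phi> \<kappa> (W x_ad) = \<infinity>"
    with m1 \<alpha> show False by simp
  qed
  have Rx_fin: "R x_ad \<noteq> \<infinity>" and Lx_fin: "wl1 \<Lambda> \<phi> \<kappa> (W x_ad) \<noteq> \<infinity>"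
    using S_fin R_nonneg wl1_nonneg[of \<Lambda> \<phi> \<kappa> "W x_ad"] by auto
  define Rx where "Rx = real_of_ereal (R x_ad)"
  have Rx: "R x_ad = ereal Rx" using Rx_fin R_nonneg[rule_format, of x_ad]
    unfolding Rx_def by (cases "R x_ad") auto
  define Lx where "Lx = real_of_ereal (wl1 \<Lambda> \<phi> \<kappa> (W x_ad))"
  have Lx: "wl1 \<Lambda> \<phi> \<kappa> (W x_ad) = ereal Lx" unfolding Lx_def using Lx_fin by (rule wl1_real)
  define r where "r = norm (A (W x_ad) - y_delta)"
  define e where "e = norm (y_star - y_delta)"
  have e\<delta>: "e \<le> \<delta>" using yd by (simp add: e_def norm_minus_commute)
  have e0: "e \<ge> 0" "r \<ge> 0" by (simp_all add: e_def r_def)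
  have mreal: "1/2 * r\<^sup>2 + \<alpha> * (Rx + Lx) \<le> 1/2 * e\<^sup>2 + \<alpha> * (Rs + Ls)"
    using m1 Rx Lx by (simp add: r_def e_def)
  define DR where "DR = Rx - Rs - \<xi> \<bullet> (x_ad - x_star)"
  define h where "h = W x_ad - v"
  define DE where "DE = Lx - Ls - \<eta> \<bullet> h"
  have DR0: "DR \<ge> 0"
  proof -
    have "R x_ad \<ge> R x_star + ereal (\<xi> \<bullet> (x_ad - x_star))" using c23(1) by (simp add: subdiff_def)
    thus ?thesis using Rx Rs by (simp add: DR_def)
  qed
  have DEgen: "ereal (\<Sum>l\<in>F. \<kappa> l * \<bar>\<phi> l \<bullet> W x_ad\<bar> - (\<phi> l \<bullet> \<eta>) * (\<phi> l \<bullet> W x_ad)) \<le> ereal DE"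
    if "finite F" "F \<subseteq> \<Lambda>" for F
    using sw(4)[OF Lx_fin that] Lx Ls by (simp add: DE_def h_def v_def)
  have DE0: "DE \<ge> 0" using DEgen[of "{}"] by simp
  have ident: "\<xi> \<bullet> (x_ad - x_star) + \<eta> \<bullet> h = \<nu> \<bullet> (A (W x_ad) - y_star)"
  proof -
    define d where "d = x_ad - x_star"
    have hd: "h = W d" by (simp add: h_def v_def d_def Wb.diff)
    have "d \<bullet> adjoint W (adjoint A \<nu>) = W d \<bullet> adjoint A \<nu>" using adjoint_ok[OF W] by simp
    also have "\<dots> = A (W d) \<bullet> \<nu>" using adjoint_ok[OF A] by simp
    finally have 1: "d \<bullet> adjoint W (adjoint A \<nu>) = A (W d) \<bullet> \<nu>" .
    have 2: "d \<bullet> adjoint W \<eta> = W d \<bullet> \<eta>" using adjoint_ok[OF W] by simp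
    have "A (W d) \<bullet> \<nu> = d \<bullet> \<xi> + W d \<bullet> \<eta>" using 1 2 c23(3) by (simp add: inner_add_right)
    moreover have "A (W d) = A (W x_ad) - y_star" using c21 by (simp add: d_def Wb.diff Ab.diff)
    ultimately show ?thesis by (simp add: hd d_def inner_commute)
  qed
  have cs: "\<nu> \<bullet> (A (W x_ad) - y_star) \<ge> - N * r - N * e"
  proof -
    have s: "A (W x_ad) - y_star = (A (W x_ad) - y_delta) + (y_delta - y_star)" by simp
    have "\<bar>\<nu> \<bullet> (A (W x_ad) - y_delta)\<bar> \<le> N * r" unfolding N_def r_def by (rule Cauchy_Schwarz_ineq2)
    moreover have "\<bar>\<nu> \<bullet> (y_delta - y_star)\<bar> \<le> N * e"
      unfolding N_def e_def using Cauchy_Schwarz_ineq2[of \<nu> "y_delta - y_star"] by (simp add: norm_minus_commute)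
    moreover have "\<nu> \<bullet> (A (W x_ad) - y_star) = \<nu> \<bullet> (A (W x_ad) - y_delta) + \<nu> \<bullet> (y_delta - y_star)" by (simp add: inner_diff_right)
    ultimately show ?thesis by linarith
  qed
  define D where "D = DR + DE"
  have D0: "D \<ge> 0" using DR0 DE0 by (simp add: D_def)
  have main_ineq: "1/2 * r\<^sup>2 + \<alpha> * D \<le> 1/2 * e\<^sup>2 + \<alpha> * N * (r + e)"
  proof -
    have eqq: "Rx + Lx = Rs + Ls + D + \<nu> \<bullet> (A (W x_ad) - y_star)"
      using ident by (simp add: D_def DR_def DE_def)
    have "\<alpha> * (Rx + Lx) = \<alpha> * (Rs + Ls) + \<alpha> * D + \<alpha> * (\<nu> \<bullet> (A (W x_ad) - y_star))"
      by (simp only: distrib_left[symmetric] eqq)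
    hence "1/2 * r\<^sup>2 + \<alpha> * D + \<alpha> * (\<nu> \<bullet> (A (W x_ad) - y_star)) \<le> 1/2 * e\<^sup>2"
      using mreal by linarith
    moreover have "\<alpha> * (\<nu> \<bullet> (A (W x_ad) - y_star)) \<ge> \<alpha> * (- N * r - N * e)"
      using cs \<alpha> by (intro mult_left_mono) auto
    ultimately show ?thesis by (simp add: algebra_simps)
  qed
  have key: "\<alpha> * D + 1/2 * (r - \<alpha> * N)\<^sup>2 \<le> 1/2 * (e + \<alpha> * N)\<^sup>2"
    proof -
    have "1/2 * (e + \<alpha> * N)\<^sup>2 - 1/2 * (r - \<alpha> * N)\<^sup>2 = 1/2 * e\<^sup>2 + \<alpha> * N * (r + e) - 1/2 * r\<^sup>2"
      by (simp add: power2_eq_square algebra_simps)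
    thus ?thesis using main_ineq by linarith
  qed
  have ed: "(e + \<alpha> * N)\<^sup>2 \<le> (\<delta> + \<alpha> * N)\<^sup>2" using e\<delta> e0 \<alpha> N0 by (intro power_mono) auto
  define c where "c = c_const C N"
  have c_eq: "\<alpha> * (c * \<delta>) = 1/2 * (\<delta> + \<alpha> * N)\<^sup>2"
    proof -
    have 1: "\<delta> + \<alpha> * N = \<delta> * (1 + C * N)" by (simp add: \<alpha>_def algebra_simps)
    have C0: "C \<noteq> 0" using C_pos by simp
    show ?thesis unfolding 1 using C0 by (simp add: c_def c_const_def \<alpha>_def power2_eq_square)
  qed
  have sq0: "0 \<le> (r - \<alpha> * N)\<^sup>2" by simp
  have "\<alpha> * D \<le> \<alpha> * (c * \<delta>)" using key ed sq0 c_eq by linarith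
  hence Dc: "D \<le> c * \<delta>" using \<alpha> by simp
  have r_bd: "r \<le> e + 2 * \<alpha> * N"
  proof -
    have "(r - \<alpha> * N)\<^sup>2 \<le> (e + \<alpha> * N)\<^sup>2" using key mult_nonneg_nonneg[OF less_imp_le[OF \<alpha>] D0] by linarith
    hence "\<bar>r - \<alpha> * N\<bar> \<le> e + \<alpha> * N" using e0 \<alpha> N0 by (simp add: power2_le_iff_abs_le)
    thus ?thesis by linarith
  qed
  have Ah: "norm (A h) \<le> 2 * \<delta> * (1 + C * N)"
  proof -
    have "A h = (A (W x_ad) - y_delta) + (y_delta - y_star)" using c21 by (simp add: h_def v_def Ab.diff)
    hence "norm (A h) \<le> r + e" unfolding r_def e_def
      by (metis norm_minus_commute norm_triangle_ineq)
    also have "\<dots> \<le> 2 * \<delta> + 2 * \<alpha> * N" using r_bd e\<delta> by linarith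
    also have "\<dots> = 2 * \<delta> * (1 + C * N)" by (simp add: \<alpha>_def algebra_simps)
    finally show ?thesis .
  qed
  have claim1: "bregman R \<xi> x_ad x_star \<le> ereal (c_const C (norm \<nu>) * \<delta>)"
  proof -
    have "bregman R \<xi> x_ad x_star = ereal DR" using Rx Rs by (simp add: bregman_def DR_def)
    moreover have "DR \<le> c * \<delta>" using Dc DE0 by (simp add: D_def)
    ultimately show ?thesis by (simp add: c_def N_def)
  qed
  have eta_le: "\<bar>\<phi> l \<bullet> \<eta>\<bar> \<le> \<kappa> l" if "l \<in> \<Lambda>" for l using sw(2) that by blast
  have v0: "\<phi> l \<bullet> v = 0" if "l \<in> \<Lambda>" "l \<notin> Om" for l
    using sw(3)[of l] that by (simp add: Om_def Omega_def v_def)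
  have Om_sub: "Om \<subseteq> \<Lambda>" by (auto simp: Om_def Omega_def)
  have Om_fin: "finite Om"
  proof (rule finite_subset)
    show "Om \<subseteq> {l\<in>\<Lambda>. \<bar>\<phi> l \<bullet> \<eta>\<bar> \<ge> a}" using \<kappa>_ge by (auto simp: Om_def Omega_def)
    show "finite {l\<in>\<Lambda>. \<bar>\<phi> l \<bullet> \<eta>\<bar> \<ge> a}" by (rule bessel_finite[OF on a_pos])
  qed
  define ai where "ai = inv_opnorm A (span (\<phi> ` Om))"
  define an where "an = onorm A"
  have inj: "inj_on A (span (\<phi> ` Om))" using c24 by (simp add: Om_def)
  have ai0: "ai \<ge> 0" unfolding ai_def using inv_opnorm_props(1)[OF Ab.linear _ inj] Om_fin by simp
  have ai_bd: "norm p \<le> ai * norm (A p)" if "p \<in> span (\<phi> ` Om)" for p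
    unfolding ai_def using inv_opnorm_props(2)[OF Ab.linear _ inj that] Om_fin by simp
  have an0: "an \<ge> 0" unfolding an_def by (rule onorm_pos_le[OF A])
  have an_bd: "norm (A q) \<le> an * norm q" for q unfolding an_def by (rule onorm[OF A])
  define full where "full = (\<Lambda> = Om)"
  define m where "m = m_eta \<Lambda> \<phi> \<kappa> \<eta>"
  define B where "B = (if full then 0 else c * \<delta> / m)"
  have mprops: "m > 0 \<and> (\<forall>l\<in>\<Lambda> - Om. m \<le> \<kappa> l - \<bar>\<phi> l \<bullet> \<eta>\<bar>)" if nf: "\<not> full"
  proof -
    define E0 where "E0 = {l\<in>\<Lambda>. \<bar>\<phi> l \<bullet> \<eta>\<bar> \<ge> a/2}"
    have E0fin: "finite E0" unfolding E0_def by (rule bessel_finite[OF on]) (use a_pos in simp)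
    define M where "M = Min (insert (a/2) ((\<lambda>l. \<kappa> l - \<bar>\<phi> l \<bullet> \<eta>\<bar>) ` (E0 - Om)))"
    have pos: "\<kappa> l - \<bar>\<phi> l \<bullet> \<eta>\<bar> > 0" if "l \<in> \<Lambda> - Om" for l
      using eta_le[of l] that by (force simp: Om_def Omega_def)
    have M0: "M > 0" unfolding M_def using E0fin a_pos pos by (subst Min_gr_iff) (auto simp: E0_def)
    have Mle: "M \<le> \<kappa> l - \<bar>\<phi> l \<bullet> \<eta>\<bar>" if l: "l \<in> \<Lambda> - Om" for l
    proof (cases "l \<in> E0")
      case True
      thus ?thesis unfolding M_def using E0fin l by (intro Min_le) auto
    next
      case False
      hence "\<bar>\<phi> l \<bullet> \<eta>\<bar> < a/2" using l by (auto simp: E0_def)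
      moreover have "\<kappa> l \<ge> a" using \<kappa>_ge l by auto
      moreover have "M \<le> a/2" unfolding M_def using E0fin by (intro Min_le) auto
      ultimately show ?thesis by linarith
    qed
    have ne: "\<Lambda> - Om \<noteq> {}" using nf Om_sub by (auto simp: full_def)
    have mdef: "m = (INF l\<in>\<Lambda> - Om. \<kappa> l - \<bar>\<phi> l \<bullet> \<eta>\<bar>)" by (simp add: m_def m_eta_def Om_def)
    have "m \<ge> M" unfolding mdef using ne Mle by (intro cINF_greatest) auto
    moreover have "\<forall>l\<in>\<Lambda> - Om. m \<le> \<kappa> l - \<bar>\<phi> l \<bullet> \<eta>\<bar>"
    proof
      fix l assume l: "l \<in> \<Lambda> - Om"
      have "bdd_below ((\<lambda>l. \<kappa> l - \<bar>\<phi> l \<bullet> \<eta>\<bar>) ` (\<Lambda> - Om))"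
        using Mle by (intro bdd_belowI2) 
      thus "m \<le> \<kappa> l - \<bar>\<phi> l \<bullet> \<eta>\<bar>" unfolding mdef using l by (intro cINF_lower)
    qed
    ultimately show ?thesis using M0 by linarith
  qed
  define Ph where "Ph = (\<Sum>l\<in>Om. (\<phi> l \<bullet> h) *\<^sub>R \<phi> l)"
  define g where "g = h - Ph"
  have PhS: "Ph \<in> span (\<phi> ` Om)" unfolding Ph_def by (intro span_sum span_mul span_base) auto
  have gc: "\<phi> l \<bullet> g = (if l \<in> Om then 0 else \<phi> l \<bullet> W x_ad)" if l: "l \<in> \<Lambda>" for l
    using on_coord[OF on Om_fin Om_sub l, of "\<lambda>l. \<phi> l \<bullet> h"] v0[OF l]
    by (auto simp: g_def Ph_def inner_diff_right h_def)
  have g_bd: "norm g \<le> B"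
  proof (rule approx_norm[OF onb])
    fix F assume F: "finite F" "F \<subseteq> \<Lambda>"
    have sF: "(\<Sum>l\<in>F. \<bar>\<phi> l \<bullet> g\<bar>) = (\<Sum>l\<in>F - Om. \<bar>\<phi> l \<bullet> W x_ad\<bar>)"
      using F gc by (intro sum.mono_neutral_cong_right) auto
    show "(\<Sum>l\<in>F. \<bar>\<phi> l \<bullet> g\<bar>) \<le> B"
    proof (cases full)
      case True
      hence e: "F - Om = {}" using F by (auto simp: full_def)
      have "(\<Sum>l\<in>F - Om. \<bar>\<phi> l \<bullet> W x_ad\<bar>) = 0" by (simp only: e sum.empty)
      thus ?thesis using sF True by (simp add: B_def)
    next
      case False
      note mp = mprops[OF False]
      have F': "finite (F - Om)" "F - Om \<subseteq> \<Lambda>" using F by auto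
      have "m * (\<Sum>l\<in>F - Om. \<bar>\<phi> l \<bullet> W x_ad\<bar>) = (\<Sum>l\<in>F - Om. m * \<bar>\<phi> l \<bullet> W x_ad\<bar>)"
        by (simp add: sum_distrib_left)
      also have "\<dots> \<le> (\<Sum>l\<in>F - Om. \<kappa> l * \<bar>\<phi> l \<bullet> W x_ad\<bar> - (\<phi> l \<bullet> \<eta>) * (\<phi> l \<bullet> W x_ad))"
      proof (intro sum_mono)
        fix l assume l: "l \<in> F - Om"
        hence lL: "l \<in> \<Lambda> - Om" using F by auto
        have "m * \<bar>\<phi> l \<bullet> W x_ad\<bar> \<le> (\<kappa> l - \<bar>\<phi> l \<bullet> \<eta>\<bar>) * \<bar>\<phi> l \<bullet> W x_ad\<bar>"
          using mp lL by (intro mult_right_mono) auto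
        moreover have "(\<phi> l \<bullet> \<eta>) * (\<phi> l \<bullet> W x_ad) \<le> \<bar>\<phi> l \<bullet> \<eta>\<bar> * \<bar>\<phi> l \<bullet> W x_ad\<bar>"
          by (metis abs_ge_self abs_mult)
        ultimately show "m * \<bar>\<phi> l \<bullet> W x_ad\<bar> \<le> \<kappa> l * \<bar>\<phi> l \<bullet> W x_ad\<bar> - (\<phi> l \<bullet> \<eta>) * (\<phi> l \<bullet> W x_ad)"
          by (simp add: algebra_simps)
      qed
      also have "\<dots> \<le> DE" using DEgen[OF F'] by simp
      also have "\<dots> \<le> c * \<delta>" using Dc DR0 by (simp add: D_def)
      finally have "m * (\<Sum>l\<in>F - Om. \<bar>\<phi> l \<bullet> W x_ad\<bar>) \<le> c * \<delta>" .
      hence "(\<Sum>l\<in>F - Om. \<bar>\<phi> l \<bullet> W x_ad\<bar>) \<le> c * \<delta> / m" using mp by (simp add: pos_le_divide_eq mult.commute)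
      thus ?thesis using sF False by (simp add: B_def)
    qed
  qed
  have B0: "B \<ge> 0" using g_bd norm_ge_zero order_trans by blast
  have "norm Ph \<le> ai * norm (A Ph)" by (rule ai_bd[OF PhS])
  also have "norm (A Ph) \<le> norm (A h) + norm (A g)"
    using norm_triangle_ineq4[of "A h" "A g"] by (simp add: g_def Ab.diff)
  also have "\<dots> \<le> 2 * \<delta> * (1 + C * N) + an * B"
    using Ah order_trans[OF an_bd[of g] mult_left_mono[OF g_bd an0]] by linarith
  finally have PhB: "norm Ph \<le> ai * (2 * \<delta> * (1 + C * N) + an * B)" using ai0 by (simp add: mult_left_mono)
  have "norm h \<le> norm Ph + norm g" using norm_triangle_ineq[of Ph g] by (simp add: g_def)
  also have "\<dots> \<le> ai * (2 * \<delta> * (1 + C * N) + an * B) + B" using PhB g_bd by linarith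
  also have "\<dots> = d_const C N ai an full m * \<delta>"
    by (simp add: d_const_def B_def c_def algebra_simps add_divide_distrib)
  finally have claim2: "norm (W x_ad - W x_star) \<le> d_const C N ai an full m * \<delta>"
    by (simp add: h_def v_def)
  show "bregman R \<xi> x_ad x_star \<le> ereal (c_const C (norm \<nu>) * \<delta>) \<and>
      norm (W x_ad - W x_star) \<le>
        d_const C (norm \<nu>) (inv_opnorm A (span (\<phi> ` Omega \<Lambda> \<phi> \<kappa> \<eta>))) (onorm A)
          (\<Lambda> = Omega \<Lambda> \<phi> \<kappa> \<eta>) (m_eta \<Lambda> \<phi> \<kappa> \<eta>) * \<delta>"
    using claim1 claim2 by (simp add: N_def ai_def an_def full_def m_def Om_def)
qed


end
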